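(* Let $M=\{M_\gamma\}_{\gamma\in\Gamma}$ and $N=\{N_\omega\}_{\omega\in\Omega}$ be defining families of functions on $\mathbb C^{k_1}$ and $\mathbb C^{k_2}$ respectively, and let $h\in\mathcal H(M\otimes N)$. Suppose $N$ satisfies: (I) for every $\omega\in\Omega$ there exist $\omega'\in\Omega$ and a bounded integrable nonnegative function $L$ on $\mathbb C^{k_2}$ with $N_\omega\le LN_{\omega'}$ and $L(w)\to0$ as $|w|\to\infty$; (II) for every $\omega\in\Omega$ there exist $\omega'\in\Omega$, a neighborhood $B$ of the origin in $\mathbb C^{k_2}$ and $C>0$ with $N_\omega(w)\le CN_{\omega'}(w+w')$ for all $w\in\mathbb C^{k_2}$, $w'\in B$. Then $h(z,\cdot)\in\mathcal H(N)$ for every $z\in\mathbb C^{k_1}$, and for every $v\in\mathcal H'(N)$ the function $h_v(z)=\langle v,h(z,\cdot)\rangle$ belongs to $\mathcal H(M)$.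
   Context: A defining family of functions on $\mathbb R^n$ is a family $M=\{M_\gamma\}_{\gamma\in\Gamma}$ of nonnegative measurable functions on $\mathbb R^n$, each bounded on bounded subsets, such that: (a) for all $\gamma_1,\gamma_2\in\Gamma$ there are $\gamma\in\Gamma$ and $C>0$ with $M_\gamma\ge C(M_{\gamma_1}+M_{\gamma_2})$; (b) there is a countable $\Gamma'\subset\Gamma$ such that for every $\gamma\in\Gamma$ there are $\gamma'\in\Gamma'$ and $C>0$ with $CM_\gamma\le M_{\gamma'}$; (c) for every $x$ there are $\gamma\in\Gamma$, a neighborhood $O(x)$ of $x$ and $C>0$ with $M_\gamma\ge C$ on $O(x)$. A defining family on $\mathbb C^k$ is a defining family on the underlying real space $\mathbb R^{2k}$. $\mathcal H(M)$ is the space of entire analytic functions $f$ on $\mathbb C^k$ with finite seminorms $\|f\|_\gamma=\sup_{z\in\mathbb C^k}M_\gamma(z)|f(z)|$, $\gamma\in\Gamma$, topologized by them; $\mathcal H'(N)$ is the continuous dual of $\mathcal H(N)$, $\langle\cdot,\cdot\rangle$ the dual pairing. $M\otimes N$ is the defining family on $\mathbb C^{k_1+k_2}$ given by $(M\otimes N)_{\gamma\omega}(z,w)=M_\gamma(z)N_\omega(w)$, $(\gamma,\omega)\in\Gamma\times\Omega$. *)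

theory Defs
  imports "HOL-Analysis.Analysis"
begin

text \<open>C^k is modelled as complex ^ 'k (k = CARD('k)); C^(k1+k2) as complex ^ ('k1 + 'k2).\<close>

definition defining_family :: "'g set \<Rightarrow> ('g \<Rightarrow> complex ^ 'k \<Rightarrow> real) \<Rightarrow> bool" where
  "defining_family G M \<longleftrightarrow>
     (\<forall>g\<in>G. (\<forall>z. 0 \<le> M g z) \<and> M g \<in> borel_measurable lebesgue
             \<and> (\<forall>S. bounded S \<longrightarrow> bounded (M g ` S))) \<and>
     (\<forall>g1\<in>G. \<forall>g2\<in>G. \<exists>g\<in>G. \<exists>C>0. \<forall>z. M g z \<ge> C * (M g1 z + M g2 z)) \<and>
     (\<exists>G'\<subseteq>G. countable G' \<and> (\<forall>g\<in>G. \<exists>g'\<in>G'. \<exists>C>0. \<forall>z. C * M g z \<le> M g' z)) \<and>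
     (\<forall>x. \<exists>g\<in>G. \<exists>U. open U \<and> x \<in> U \<and> (\<exists>C>0. \<forall>z\<in>U. M g z \<ge> C))"

definition entire_cn :: "(complex ^ 'k \<Rightarrow> complex) \<Rightarrow> bool" where
  "entire_cn f \<longleftrightarrow>
     (\<forall>z. \<exists>D. (f has_derivative D) (at z) \<and> (\<forall>c x. D (c *s x) = c * D x))"

definition Hspace :: "'g set \<Rightarrow> ('g \<Rightarrow> complex ^ 'k \<Rightarrow> real) \<Rightarrow> (complex ^ 'k \<Rightarrow> complex) set" where
  "Hspace G M = {f. entire_cn f \<and> (\<forall>g\<in>G. bdd_above (range (\<lambda>z. M g z * norm (f z))))}"

definition hseminorm :: "('g \<Rightarrow> complex ^ 'k \<Rightarrow> real) \<Rightarrow> 'g \<Rightarrow> (complex ^ 'k \<Rightarrow> complex) \<Rightarrow> real" where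
  "hseminorm M g f = (SUP z. M g z * norm (f z))"

text \<open>Continuous dual H'(M): complex-linear functionals on H(M) that are continuous for the
  locally convex topology of the seminorms, i.e. bounded by a constant times the maximum of
  finitely many seminorms.\<close>
definition Hdual :: "'g set \<Rightarrow> ('g \<Rightarrow> complex ^ 'k \<Rightarrow> real) \<Rightarrow> ((complex ^ 'k \<Rightarrow> complex) \<Rightarrow> complex) set" where
  "Hdual G M = {v.
     (\<forall>f\<in>Hspace G M. \<forall>g\<in>Hspace G M. v (\<lambda>z. f z + g z) = v f + v g) \<and>
     (\<forall>f\<in>Hspace G M. \<forall>c. v (\<lambda>z. c * f z) = c * v f) \<and>
     (\<exists>F C. finite F \<and> F \<subseteq> G \<and> 0 \<le> C \<and>
        (\<forall>f\<in>Hspace G M. norm (v f) \<le> C * (\<Sum>g\<in>F. hseminorm M g f)))}"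

definition cjoin :: "complex ^ 'a \<Rightarrow> complex ^ 'b \<Rightarrow> complex ^ ('a + 'b)" where
  "cjoin z w = (\<chi> i. case i of Inl a \<Rightarrow> z $ a | Inr b \<Rightarrow> w $ b)"

definition tensor_family :: "('g \<Rightarrow> complex ^ 'a \<Rightarrow> real) \<Rightarrow> ('o \<Rightarrow> complex ^ 'b \<Rightarrow> real)
     \<Rightarrow> ('g \<times> 'o) \<Rightarrow> complex ^ ('a + 'b) \<Rightarrow> real" where
  "tensor_family M N go u =
     M (fst go) (\<chi> a. u $ Inl a) * N (snd go) (\<chi> b. u $ Inr b)"

end

theory Submission
  imports Defs "HOL-Complex_Analysis.Cauchy_Integral_Formula"
begin

lemma cjoin_add: "cjoin (x + y) (x' + y') = cjoin x x' + cjoin y y'"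
  by (simp add: cjoin_def vec_eq_iff split: sum.split)

lemma cjoin_smult: "cjoin (c *s x) (c *s y) = c *s cjoin x y"
  by (simp add: cjoin_def vec_eq_iff split: sum.split)

lemma cjoin_scaleR: "cjoin (r *\<^sub>R x) (r *\<^sub>R y) = r *\<^sub>R cjoin x y"
  by (simp add: cjoin_def vec_eq_iff split: sum.split)

lemma cjoin_zero: "cjoin 0 0 = 0"
  by (simp add: cjoin_def vec_eq_iff split: sum.split)

lemma cjoin_split: "cjoin z w = cjoin z 0 + cjoin 0 w"
  by (simp add: cjoin_def vec_eq_iff split: sum.split)

lemma cjoin_fst: "(\<chi> a. cjoin z w $ Inl a) = z" and cjoin_snd: "(\<chi> b. cjoin z w $ Inr b) = w"
  by (simp_all add: cjoin_def vec_eq_iff)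

lemma tensor_cjoin: "tensor_family M N (g, om) (cjoin z w) = M g z * N om w"
  by (simp add: tensor_family_def cjoin_fst cjoin_snd)

lemma bl_cjoin_right: "bounded_linear (\<lambda>w. cjoin (0::complex^'a) (w::complex^'b))"
proof -
  have "linear (\<lambda>w. cjoin (0::complex^'a) (w::complex^'b))"
    by (rule linearI) (metis add_0 cjoin_add, metis scaleR_zero_right cjoin_scaleR)
  then show ?thesis using linear_conv_bounded_linear by blast
qed

lemma bl_smult: "bounded_linear (\<lambda>t::complex. t *s (q::complex^'n))"
proof -
  have "linear (\<lambda>t::complex. t *s (q::complex^'n))"
    by (rule linearI) (simp_all add: vec_eq_iff algebra_simps)
  then show ?thesis using linear_conv_bounded_linear by blast
qed

lemma norm_smult_cvec: "norm (c *s (x::complex^'n)) = norm c * norm x"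
proof -
  have "norm (c *s x) = L2_set (\<lambda>i. norm c * norm (x $ i)) UNIV"
    by (simp add: norm_vec_def norm_mult)
  also have "\<dots> = norm c * L2_set (\<lambda>i. norm (x $ i)) UNIV"
    by (simp add: L2_set_right_distrib)
  finally show ?thesis by (simp add: norm_vec_def)
qed

lemma entire_cn_comb:
  assumes "entire_cn f" "entire_cn g"
  shows "entire_cn (\<lambda>x. a * f x + b * g x)"
  unfolding entire_cn_def
proof
  fix z
  from assms obtain Df Dg where f: "(f has_derivative Df) (at z)" "\<forall>c x. Df (c *s x) = c * Df x"
    and g: "(g has_derivative Dg) (at z)" "\<forall>c x. Dg (c *s x) = c * Dg x"
    unfolding entire_cn_def by metis
  have "((\<lambda>x. a * f x + b * g x) has_derivative (\<lambda>x. a * Df x + b * Dg x)) (at z)"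
    by (intro derivative_intros f g)
  moreover have "\<forall>c x. a * Df (c *s x) + b * Dg (c *s x) = c * (a * Df x + b * Dg x)"
    using f(2) g(2) by (simp add: algebra_simps)
  ultimately show "\<exists>D. ((\<lambda>x. a * f x + b * g x) has_derivative D) (at z) \<and> (\<forall>c x. D (c *s x) = c * D x)"
    by blast
qed

lemma Hspace_comb:
  assumes f: "f \<in> Hspace W N" and g: "g \<in> Hspace W N" and N0: "\<forall>om\<in>W. \<forall>w. 0 \<le> N om w"
  shows "(\<lambda>x. a * f x + b * g x) \<in> Hspace W N"
  unfolding Hspace_def
proof (intro CollectI conjI ballI)
  show "entire_cn (\<lambda>x. a * f x + b * g x)"
    using f g by (intro entire_cn_comb) (auto simp: Hspace_def)
  fix om assume om: "om \<in> W"
  obtain A where A: "\<And>x. N om x * norm (f x) \<le> A"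
    using f om unfolding Hspace_def bdd_above_def by auto
  obtain B where B: "\<And>x. N om x * norm (g x) \<le> B"
    using g om unfolding Hspace_def bdd_above_def by auto
  have "N om x * norm (a * f x + b * g x) \<le> norm a * A + norm b * B" for x
  proof -
    have "N om x * norm (a * f x + b * g x) \<le> N om x * (norm a * norm (f x) + norm b * norm (g x))"
      using N0 om by (intro mult_left_mono) (auto intro: order_trans[OF norm_triangle_ineq] simp: norm_mult)
    also have "\<dots> = norm a * (N om x * norm (f x)) + norm b * (N om x * norm (g x))"
      by (simp add: algebra_simps)
    also have "\<dots> \<le> norm a * A + norm b * B"
      by (intro add_mono mult_left_mono A B) auto
    finally show ?thesis .
  qed
  then show "bdd_above (range (\<lambda>x. N om x * norm (a * f x + b * g x)))"
    by (auto simp: bdd_above_def)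
qed

lemma Hdual_comb:
  assumes v: "v \<in> Hdual W N" and f: "f \<in> Hspace W N" and g: "g \<in> Hspace W N"
    and N0: "\<forall>om\<in>W. \<forall>w. 0 \<le> N om w"
  shows "v (\<lambda>x. a * f x + b * g x) = a * v f + b * v g"
proof -
  have fa: "(\<lambda>x. a * f x + 0 * g x) \<in> Hspace W N" and gb: "(\<lambda>x. b * g x + 0 * g x) \<in> Hspace W N"
    using Hspace_comb[OF f g N0] Hspace_comb[OF g g N0] by blast+
  have fa': "(\<lambda>x. a * f x) \<in> Hspace W N" using fa by simp
  have gb': "(\<lambda>x. b * g x) \<in> Hspace W N" using gb by simp
  have "v (\<lambda>x. a * f x + b * g x) = v (\<lambda>x. a * f x) + v (\<lambda>x. b * g x)"
    using v fa' gb' unfolding Hdual_def by auto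
  also have "\<dots> = a * v f + b * v g"
    using v f g unfolding Hdual_def by auto
  finally show ?thesis .
qed

lemma Hdual_bound:
  assumes v: "v \<in> Hdual W N" and f: "f \<in> Hspace W N"
  obtains F C where "finite F" "F \<subseteq> W" "0 \<le> C"
    "\<And>f B. f \<in> Hspace W N \<Longrightarrow> (\<And>om w. om \<in> F \<Longrightarrow> N om w * norm (f w) \<le> B om) \<Longrightarrow>
       norm (v f) \<le> C * (\<Sum>om\<in>F. B om)"
proof -
  obtain F C where F: "finite F" "F \<subseteq> W" "0 \<le> C"
    and b: "\<And>f. f \<in> Hspace W N \<Longrightarrow> norm (v f) \<le> C * (\<Sum>g\<in>F. hseminorm N g f)"
    using v unfolding Hdual_def by blast
  show ?thesis
  proof (rule that[OF F])
    fix f B assume f: "f \<in> Hspace W N" and B: "\<And>om w. om \<in> F \<Longrightarrow> N om w * norm (f w) \<le> B om"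
    have "hseminorm N om f \<le> B om" if "om \<in> F" for om
      unfolding hseminorm_def by (rule cSUP_least) (use B that in auto)
    then have "(\<Sum>g\<in>F. hseminorm N g f) \<le> (\<Sum>om\<in>F. B om)" by (rule sum_mono)
    then show "norm (v f) \<le> C * (\<Sum>om\<in>F. B om)"
      using b[OF f] F(3) by (meson mult_left_mono order_trans)
  qed
qed

lemma Hdual_list:
  assumes v: "v \<in> Hdual W N" and N0: "\<forall>om\<in>W. \<forall>w. 0 \<le> N om w"
    and fs: "\<forall>(c, f)\<in>set xs. f \<in> Hspace W N"
  shows "(\<lambda>x. \<Sum>(c, f)\<leftarrow>xs. c * f x) \<in> Hspace W N \<and>
         v (\<lambda>x. \<Sum>(c, f)\<leftarrow>xs. c * f x) = (\<Sum>(c, f)\<leftarrow>xs. c * v f)"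
  using fs
proof (induction xs)
  case Nil
  have z: "(\<lambda>x. 0::complex) \<in> Hspace W N"
    by (auto simp: Hspace_def entire_cn_def intro!: exI[of _ "\<lambda>_. 0"])
  have "v (\<lambda>x. 0 * (\<lambda>x. 0) x + 0 * (\<lambda>x. 0) x) = 0 * v (\<lambda>x. 0) + 0 * v (\<lambda>x. 0)"
    by (rule Hdual_comb[OF v z z N0])
  then show ?case using z by simp
next
  case (Cons p xs)
  obtain c f where p: "p = (c, f)" by (cases p)
  have f: "f \<in> Hspace W N" using Cons.prems p by auto
  have IH: "(\<lambda>x. \<Sum>(c, f)\<leftarrow>xs. c * f x) \<in> Hspace W N"
      "v (\<lambda>x. \<Sum>(c, f)\<leftarrow>xs. c * f x) = (\<Sum>(c, f)\<leftarrow>xs. c * v f)"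
    using Cons by auto
  have "(\<lambda>x. c * f x + 1 * (\<lambda>x. \<Sum>(c, f)\<leftarrow>xs. c * f x) x) \<in> Hspace W N"
    by (rule Hspace_comb[OF f IH(1) N0])
  moreover have "v (\<lambda>x. c * f x + 1 * (\<lambda>x. \<Sum>(c, f)\<leftarrow>xs. c * f x) x) =
      c * v f + 1 * v (\<lambda>x. \<Sum>(c, f)\<leftarrow>xs. c * f x)"
    by (rule Hdual_comb[OF v f IH(1) N0])
  ultimately show ?case using IH(2) p by simp
qed

lemma limit_bound:
  fixes X :: "nat \<Rightarrow> complex"
  assumes X: "X \<longlonglongrightarrow> l" and b: "\<And>m. m \<ge> N \<Longrightarrow> norm (a - X m) \<le> B + B' / real (Suc m)"
  shows "norm (a - l) \<le> B"
proof -
  have "(\<lambda>m. norm (a - X m)) \<longlonglongrightarrow> norm (a - l)"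
    by (intro tendsto_intros X)
  moreover have "(\<lambda>m. B + B' / real (Suc m)) \<longlonglongrightarrow> B + 0"
    by (intro tendsto_intros LIMSEQ_Suc[OF lim_const_over_n])
  moreover have "eventually (\<lambda>m. norm (a - X m) \<le> B + B' / real (Suc m)) sequentially"
    using b by (auto simp: eventually_sequentially)
  ultimately show ?thesis
    using tendsto_le[OF trivial_limit_sequentially] by fastforce
qed

lemma zero_by_bound:
  fixes x :: complex
  assumes b: "\<And>n. n \<ge> N \<Longrightarrow> norm x \<le> B / real (Suc n)"
  shows "x = 0"
proof -
  have "norm (x - 0) \<le> 0"
    using limit_bound[where X="\<lambda>_. 0" and l=0 and N=N and a=x and B=0 and B'=B] b by auto
  then show ?thesis by simp
qed

lemma has_derivative_quad:
  fixes f :: "'n::euclidean_space \<Rightarrow> complex"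
  assumes L: "bounded_linear L" and r: "0 < r"
    and b: "\<And>u. norm u \<le> r \<Longrightarrow> norm (f (z + u) - f z - L u) \<le> K * norm u ^ 2"
  shows "(f has_derivative L) (at z)"
  unfolding has_derivative_iff_norm
proof (intro conjI L)
  have "eventually (\<lambda>y. norm (norm (f y - f z - L (y - z)) / norm (y - z)) \<le> \<bar>K\<bar> * norm (y - z)) (at z)"
    unfolding eventually_at
  proof (intro exI[of _ r] conjI ballI impI r)
    fix y assume y: "y \<noteq> z \<and> dist y z < r"
    then have "norm (f (z + (y - z)) - f z - L (y - z)) \<le> K * norm (y - z) ^ 2"
      by (intro b) (auto simp: dist_norm)
    then have "norm (f y - f z - L (y - z)) \<le> \<bar>K\<bar> * norm (y - z) ^ 2"
      by (smt (verit) add.commute diff_add_cancel mult_right_mono zero_le_power2)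
    then show "norm (norm (f y - f z - L (y - z)) / norm (y - z)) \<le> \<bar>K\<bar> * norm (y - z)"
      using y by (simp add: divide_le_eq power2_eq_square mult.assoc)
  qed
  moreover have "((\<lambda>y. \<bar>K\<bar> * norm (y - z)) \<longlongrightarrow> 0) (at z)"
  proof -
    have "((\<lambda>y. \<bar>K\<bar> * norm (y - z)) \<longlongrightarrow> \<bar>K\<bar> * norm (z - z)) (at z)"
      by (intro tendsto_intros)
    then show ?thesis by simp
  qed
  ultimately show "((\<lambda>y. norm (f y - f z - L (y - z)) / norm (y - z)) \<longlongrightarrow> 0) (at z)"
    by (rule Lim_null_comparison)
qed

lemma sum_list_split:
  fixes D :: "complex^('a::finite + 'b::finite) \<Rightarrow> complex"
  assumes add: "\<And>x y. D (x + y) = D x + D y" and hom: "\<And>c x. D (c *s x) = c * D x"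
  shows "(\<Sum>(c,y)\<leftarrow>ys. c * (P y + Q + D (cjoin y (0::complex^'b)))) =
         (\<Sum>(c,y)\<leftarrow>ys. c * P y) + (\<Sum>(c,y)\<leftarrow>ys. c) * Q + D (cjoin (\<Sum>(c,y)\<leftarrow>ys. c *s y) 0)"
proof (induction ys)
  case Nil
  have "D 0 = 0" using hom[of 0 0] by simp
  then show ?case by (simp add: cjoin_zero)
next
  case (Cons p ys)
  obtain c y where p: "p = (c, y)" by (cases p)
  define S where "S = (\<Sum>(c,y)\<leftarrow>ys. c *s y)"
  have "D (cjoin (c *s y + S) 0) = D (cjoin (c *s y) 0 + cjoin S 0)"
    using cjoin_add[of "c *s y" S "0::complex^'b" "0::complex^'b"] by simp
  also have "\<dots> = D (cjoin (c *s y) 0) + D (cjoin S 0)" by (rule add)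
  also have "cjoin (c *s y) 0 = c *s cjoin y (0::complex^'b)"
    using cjoin_smult[of c y 0] by simp
  finally have "D (cjoin (c *s y + S) 0) = c * D (cjoin y 0) + D (cjoin S 0)" by (simp add: hom)
  then have "D (cjoin (c *s y + (\<Sum>(c,y)\<leftarrow>ys. c *s y)) 0) = c * D (cjoin y 0) + D (cjoin (\<Sum>(c,y)\<leftarrow>ys. c *s y) 0)"
    by (simp add: S_def)
  then show ?case using Cons p by (simp add: algebra_simps)
qed

lemma sum_list_bound:
  fixes P :: "'x \<Rightarrow> complex"
  assumes a: "0 \<le> a" and b: "\<forall>(c,y)\<in>set ys. a * norm (P y) \<le> K * Q y" and K: "0 \<le> K"
  shows "a * norm (\<Sum>(c,y)\<leftarrow>ys. c * P y) \<le> K * (\<Sum>(c,y)\<leftarrow>ys. norm c * Q y)"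
  using b
proof (induction ys)
  case Nil
  then show ?case by simp
next
  case (Cons p ys)
  obtain c y where p: "p = (c, y)" by (cases p)
  have IH: "a * norm (\<Sum>(c,y)\<leftarrow>ys. c * P y) \<le> K * (\<Sum>(c,y)\<leftarrow>ys. norm c * Q y)"
    using Cons by auto
  have 1: "a * norm (P y) \<le> K * Q y" using Cons.prems p by auto
  have "a * norm (c * P y + (\<Sum>(c,y)\<leftarrow>ys. c * P y)) \<le> a * (norm c * norm (P y) + norm (\<Sum>(c,y)\<leftarrow>ys. c * P y))"
    using a by (intro mult_left_mono) (auto intro: order_trans[OF norm_triangle_ineq] simp: norm_mult)
  also have "\<dots> = norm c * (a * norm (P y)) + a * norm (\<Sum>(c,y)\<leftarrow>ys. c * P y)"
    by (simp add: algebra_simps)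
  also have "\<dots> \<le> norm c * (K * Q y) + K * (\<Sum>(c,y)\<leftarrow>ys. norm c * Q y)"
    by (intro add_mono mult_left_mono 1 IH) auto
  finally show ?case using p by (simp add: algebra_simps)
qed

lemma convergent_by_bound:
  fixes X :: "nat \<Rightarrow> complex"
  assumes b: "\<And>m n. m \<ge> N \<Longrightarrow> n \<ge> N \<Longrightarrow> norm (X m - X n) \<le> B / real (Suc m) + B / real (Suc n)"
  shows "convergent X"
proof -
  have "Cauchy X"
  proof (rule metric_CauchyI)
    fix e :: real assume e: "0 < e"
    have "(\<lambda>n. B / real (Suc n)) \<longlonglongrightarrow> 0" by (rule LIMSEQ_Suc[OF lim_const_over_n])
    then have "eventually (\<lambda>n. B / real (Suc n) < e / 2) sequentially"
      using e by (intro order_tendstoD) auto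
    then obtain M where M: "\<And>n. n \<ge> M \<Longrightarrow> B / real (Suc n) < e / 2"
      by (auto simp: eventually_sequentially)
    show "\<exists>M. \<forall>m\<ge>M. \<forall>n\<ge>M. dist (X m) (X n) < e"
    proof (intro exI[of _ "max M N"] allI impI)
      fix m n assume "max M N \<le> m" "max M N \<le> n"
      then have "norm (X m - X n) \<le> B / real (Suc m) + B / real (Suc n)"
        "B / real (Suc m) < e / 2" "B / real (Suc n) < e / 2" using b M by auto
      then show "dist (X m) (X n) < e" unfolding dist_norm by linarith
    qed
  qed
  then show ?thesis by (rule Cauchy_convergent)
qed

lemma smult_inv_nat: "of_nat (Suc n) *s ((1 / real (Suc n)) *\<^sub>R (u::complex^'n)) = u"
proof -
  have cx: "of_nat (Suc n) * ((1 / real (Suc n)) *\<^sub>R x) = (x::complex)" for x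
  proof -
    have "(1 / real (Suc n)) *\<^sub>R x = x / of_nat (Suc n)"
      by (simp add: scaleR_conv_of_real divide_inverse mult.commute del: of_nat_Suc)
    then show ?thesis by (simp del: of_nat_Suc)
  qed
  show ?thesis by (simp only: vec_eq_iff vector_smult_component vector_scaleR_component cx) simp
qed

lemma taylor2_bound:
  fixes \<phi> :: "complex \<Rightarrow> complex"
  assumes hol: "\<phi> holomorphic_on UNIV" and S: "\<And>\<zeta>. norm \<zeta> \<le> 2 \<Longrightarrow> norm (\<phi> \<zeta>) \<le> S"
    and t: "norm t \<le> 1"
  shows "norm (\<phi> t - \<phi> 0 - t * deriv \<phi> 0) \<le> S * norm t ^ 2"
proof -
  define a where "a n = (deriv ^^ n) \<phi> 0 / fact n" for n
  have sums: "(\<lambda>n. a n * t ^ n) sums \<phi> t"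
    using holomorphic_power_series[of \<phi> 0 3 t] hol t unfolding a_def
    by (auto intro: holomorphic_on_subset)
  have an: "norm (a n) \<le> S / 2 ^ n" for n
  proof -
    have "norm ((deriv ^^ n) \<phi> 0) \<le> fact n * S / 2 ^ n"
      by (rule Cauchy_inequality) (auto intro: holomorphic_on_subset[OF hol] holomorphic_on_imp_continuous_on S)
    then show ?thesis unfolding a_def by (simp add: norm_divide field_simps)
  qed
  have "norm (\<phi> 0) \<le> S" by (rule S) simp
  then have S0: "0 \<le> S" using norm_ge_zero[of "\<phi> 0"] by linarith
  have sh: "(\<lambda>n. a (n+2) * t ^ (n+2)) sums (\<phi> t - (\<Sum>i<2. a i * t ^ i))"
    using sums_split_initial_segment[OF sums, of 2] by simp
  have eq: "(\<Sum>i<2. a i * t ^ i) = \<phi> 0 + t * deriv \<phi> 0"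
    by (simp add: a_def eval_nat_numeral)
  have bnd: "norm (a (n+2) * t ^ (n+2)) \<le> S * norm t ^ 2 / 4 * (1/2) ^ n" for n
  proof -
    have "norm (a (n+2) * t ^ (n+2)) = norm (a (n+2)) * (norm t ^ n * norm t ^ 2)"
      by (simp add: norm_mult norm_power power_add power2_eq_square)
    also have "\<dots> \<le> S / 2 ^ (n+2) * (1 * norm t ^ 2)"
      by (intro mult_mono an) (auto simp: power_le_one t S0)
    also have "\<dots> = S * norm t ^ 2 / 4 * (1/2) ^ n" by (simp add: power_add field_simps)
    finally show ?thesis .
  qed
  have gs: "(\<lambda>n. S * norm t ^ 2 / 4 * (1/2) ^ n) sums (S * norm t ^ 2 / 4 * 2)"
    using sums_mult[OF geometric_sums[of "1/2::real"], of "S * norm t ^ 2 / 4"] by simp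
  have "norm (\<phi> t - \<phi> 0 - t * deriv \<phi> 0) = norm (\<Sum>n. a (n+2) * t ^ (n+2))"
    using sh eq by (simp add: sums_iff diff_diff_eq)
  also have "\<dots> \<le> (\<Sum>n. S * norm t ^ 2 / 4 * (1/2) ^ n)"
    by (rule norm_suminf_le[OF bnd]) (use gs in \<open>simp add: sums_iff\<close>)
  also have "\<dots> = S * norm t ^ 2 / 2" using gs by (simp add: sums_iff)
  also have "\<dots> \<le> S * norm t ^ 2" using mult_nonneg_nonneg[OF S0 zero_le_power2[of "norm t"]] by simp
  finally show ?thesis .
qed

lemma smult_inv_nat_c: "of_nat (Suc n) *s ((1 / of_nat (Suc n) :: complex) *s (u::complex^'n)) = u"
  by (simp add: vec_eq_iff del: of_nat_Suc)

lemma norm_inv_nat_c: "norm ((1 / of_nat (Suc n) :: complex) *s (u::complex^'n)) = norm u / real (Suc n)"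
  by (simp add: norm_smult_cvec norm_divide del: of_nat_Suc)

lemma tri4: "norm (A - B + a * C + b * D) \<le> norm A + norm B + norm a * norm C + norm (b::complex) * norm D"
proof -
  have 1: "norm (A - B + a * C + b * D) \<le> norm (A - B + a * C) + norm (b * D)" by (rule norm_triangle_ineq)
  have 2: "norm (A - B + a * C) \<le> norm (A - B) + norm (a * C)" by (rule norm_triangle_ineq)
  have 3: "norm (A - B) \<le> norm A + norm B" by (rule norm_triangle_ineq4)
  show ?thesis using 1 2 3 by (simp add: norm_mult)
qed

lemma Phi_entire:
  fixes h :: "complex^('a::finite + 'b::finite) \<Rightarrow> complex" and N :: "'o \<Rightarrow> complex^'b \<Rightarrow> real"
    and M :: "'g \<Rightarrow> complex^'a \<Rightarrow> real"
  assumes hent: "entire_cn h" and N0: "\<forall>om\<in>W. \<forall>w. 0 \<le> N om w"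
    and Abnd: "\<And>g om z w. g \<in> G \<Longrightarrow> om \<in> W \<Longrightarrow> M g z * N om w * norm (h (cjoin z w)) \<le> A g om"
    and A0: "\<And>g om. g \<in> G \<Longrightarrow> om \<in> W \<Longrightarrow> 0 \<le> A g om"
    and Mloc: "\<And>z. \<exists>g\<in>G. \<exists>U. open U \<and> z \<in> U \<and> (\<exists>C>0. \<forall>x\<in>U. C \<le> M g x)"
    and part1: "\<And>z. (\<lambda>w. h (cjoin z w)) \<in> Hspace W N"
    and v: "v \<in> Hdual W N"
  shows "entire_cn (\<lambda>z. v (\<lambda>w. h (cjoin z w)))"
  unfolding entire_cn_def
proof
  fix z :: "complex^'a"
  define \<Phi> where "\<Phi> x = v (\<lambda>w. h (cjoin x w))" for x
  obtain g U C0 where g: "g \<in> G" "open U" "z \<in> U" "C0 > 0" "\<forall>x\<in>U. C0 \<le> M g x"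
    using Mloc[of z] by blast
  obtain \<rho> where \<rho>: "\<rho> > 0" "ball z \<rho> \<subseteq> U" using g open_contains_ball by blast
  define r where "r = \<rho> / 3"
  have r: "r > 0" using \<rho> by (simp add: r_def)
  define Dh where "Dh p = (SOME D. (h has_derivative D) (at p) \<and> (\<forall>c x. D (c *s x) = c * D x))" for p
  have Dh: "(h has_derivative Dh p) (at p) \<and> (\<forall>c x. Dh p (c *s x) = c * Dh p x)" for p
  proof -
    have ex: "\<exists>D. (h has_derivative D) (at p) \<and> (\<forall>c x. D (c *s x) = c * D x)"
      using hent by (simp add: entire_cn_def)
    show ?thesis unfolding Dh_def by (rule someI_ex[OF ex])
  qed
  have Dadd: "Dh p (x + y) = Dh p x + Dh p y" for p x y
  proof -
    have "bounded_linear (Dh p)" using Dh[of p] has_derivative_bounded_linear by blast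
    then show ?thesis by (simp add: bounded_linear.linear linear_add)
  qed
  have Dhom: "Dh p (c *s x) = c * Dh p x" for p c x using Dh by blast
  define R where "R y w = h (cjoin (z + y) w) - h (cjoin z w) - Dh (cjoin z w) (cjoin y 0)" for y w
  define K where "K om = A g om / (C0 * r^2)" for om
  have K0: "0 \<le> K om" if "om \<in> W" for om using A0[OF g(1) that] g r by (auto simp: K_def)
  have core: "N om w * norm (R y w) \<le> K om * norm y ^ 2" if om: "om \<in> W" and y: "norm y \<le> r" for om w y
  proof (cases "y = 0 \<or> N om w = 0")
    case True
    then show ?thesis
    proof
      assume y0: "y = 0"
      have "R y w = 0" using Dhom[of _ 0 0] by (simp add: R_def cjoin_zero y0)
      then show ?thesis using y0 by simp
    next
      assume "N om w = 0" then show ?thesis using K0[OF om] by simp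
    qed
  next
    case False
    then have y0: "y \<noteq> 0" and Np: "N om w > 0" using N0 om by (auto simp: less_le)
    define e where "e = (r / norm y) *\<^sub>R y"
    have ne: "norm e = r" using y0 r by (simp add: e_def)
    define p where "p = cjoin z w"
    define q where "q = cjoin e (0::complex^'b)"
    define \<phi> where "\<phi> \<zeta> = h (p + \<zeta> *s q)" for \<zeta>
    have d\<phi>: "(\<phi> has_field_derivative Dh (p + \<zeta> *s q) q) (at \<zeta>)" for \<zeta>
    proof -
      have i: "((\<lambda>\<zeta>. p + \<zeta> *s q) has_derivative (\<lambda>\<eta>. \<eta> *s q)) (at \<zeta>)"
        using has_derivative_add[OF has_derivative_const bounded_linear_imp_has_derivative[OF bl_smult]]
        by simp
      have "(\<phi> has_derivative (\<lambda>\<eta>. Dh (p + \<zeta> *s q) (\<eta> *s q))) (at \<zeta>)"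
        unfolding \<phi>_def using has_derivative_compose[OF i Dh[THEN conjunct1]] by simp
      moreover have "(\<lambda>\<eta>. Dh (p + \<zeta> *s q) (\<eta> *s q)) = (*) (Dh (p + \<zeta> *s q) q)"
        using Dhom by (auto simp: mult.commute)
      ultimately show ?thesis by (simp add: has_field_derivative_def)
    qed
    have hol: "\<phi> holomorphic_on UNIV"
      using d\<phi> by (auto simp: holomorphic_on_def field_differentiable_def)
    have d0: "deriv \<phi> 0 = Dh p q" using DERIV_imp_deriv[OF d\<phi>[of 0]] by simp
    define S where "S = A g om / (C0 * N om w)"
    have Sb: "norm (\<phi> \<zeta>) \<le> S" if z2: "norm \<zeta> \<le> 2" for \<zeta>
    proof -
      have pe: "p + \<zeta> *s q = cjoin (z + \<zeta> *s e) w"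
        using cjoin_add[of z "\<zeta> *s e" w "0::complex^'b"] cjoin_smult[of \<zeta> e "0::complex^'b"] by (simp add: p_def q_def)
      have "norm (\<zeta> *s e) \<le> 2 * r"
        using z2 ne r by (simp add: norm_smult_cvec mult_right_mono)
      then have "norm (\<zeta> *s e) < \<rho>" using r by (simp add: r_def)
      then have "z + \<zeta> *s e \<in> U" using \<rho> by (auto simp: dist_norm)
      then have C: "C0 \<le> M g (z + \<zeta> *s e)" using g by blast
      have "C0 * N om w * norm (\<phi> \<zeta>) \<le> M g (z + \<zeta> *s e) * N om w * norm (\<phi> \<zeta>)"
        using C N0 om by (intro mult_right_mono) auto
      also have "\<dots> \<le> A g om" unfolding \<phi>_def pe by (rule Abnd[OF g(1) om])
      finally have "(C0 * N om w) * norm (\<phi> \<zeta>) \<le> A g om" .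
      then show ?thesis using g(4) Np by (simp add: S_def field_simps)
    qed
    define t where "t = complex_of_real (norm y / r)"
    have nt: "norm t = norm y / r" unfolding t_def norm_of_real using r by simp
    have t1: "norm t \<le> 1" using y r nt by simp
    have te: "t *s e = y"
    proof -
      have "complex_of_real (norm y / r) * ((r / norm y) *\<^sub>R c) = c" for c :: complex
        using y0 r by (simp add: scaleR_conv_of_real)
      then show ?thesis by (simp add: vec_eq_iff t_def e_def)
    qed
    have pt: "p + t *s q = cjoin (z + y) w"
      using cjoin_add[of z "t *s e" w "0::complex^'b"] cjoin_smult[of t e "0::complex^'b"] te by (simp add: p_def q_def)
    have tD: "t * Dh p q = Dh p (cjoin y 0)"
      using Dhom[of p t q] cjoin_smult[of t e "0::complex^'b"] te by (simp add: q_def)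
    have "norm (R y w) = norm (\<phi> t - \<phi> 0 - t * deriv \<phi> 0)"
    proof -
      have Rp: "R y w = h (cjoin (z + y) w) - h p - Dh p (cjoin y 0)" by (simp add: R_def p_def)
      show ?thesis unfolding Rp \<phi>_def pt d0 tD by simp
    qed
    also have "\<dots> \<le> S * norm t ^ 2" by (rule taylor2_bound[OF hol Sb t1])
    finally have "N om w * norm (R y w) \<le> N om w * (S * norm t ^ 2)" using Np by simp
    also have "\<dots> = K om * norm y ^ 2"
      using Np g(4) r by (simp add: S_def K_def nt field_simps power2_eq_square)
    finally show ?thesis .
  qed
  obtain F Cv where F: "finite F" "F \<subseteq> W" "0 \<le> Cv"
    and vb: "\<And>f B. f \<in> Hspace W N \<Longrightarrow> (\<And>om w. om \<in> F \<Longrightarrow> N om w * norm (f w) \<le> B om) \<Longrightarrow>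
       norm (v f) \<le> Cv * (\<Sum>om\<in>F. B om)"
    using Hdual_bound[OF v part1[of 0]] by blast
  define Kt where "Kt = Cv * (\<Sum>om\<in>F. K om)"
  have comb: "norm (\<Sum>(c,y)\<leftarrow>ys. c * \<Phi> (z + y)) \<le> Kt * (\<Sum>(c,y)\<leftarrow>ys. norm c * norm y ^ 2)"
    if ys: "\<forall>(c,y)\<in>set ys. norm y \<le> r" "(\<Sum>(c,y)\<leftarrow>ys. c) = 0" "(\<Sum>(c,y)\<leftarrow>ys. c *s y) = 0" for ys
  proof -
    define xs where "xs = map (\<lambda>(c,y). (c, \<lambda>w. h (cjoin (z + y) w))) ys"
    have xsH: "\<forall>(c,f)\<in>set xs. f \<in> Hspace W N" using part1 by (auto simp: xs_def)
    note L = Hdual_list[OF v N0 xsH]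
    have e1: "(\<lambda>x. \<Sum>(c,f)\<leftarrow>xs. c * f x) = (\<lambda>x. \<Sum>(c,y)\<leftarrow>ys. c * h (cjoin (z + y) x))"
      by (simp add: xs_def o_def case_prod_unfold)
    have e2: "(\<Sum>(c,f)\<leftarrow>xs. c * v f) = (\<Sum>(c,y)\<leftarrow>ys. c * \<Phi> (z + y))"
      by (simp add: xs_def o_def case_prod_unfold \<Phi>_def)
    have pw: "(\<Sum>(c,y)\<leftarrow>ys. c * h (cjoin (z + y) w)) = (\<Sum>(c,y)\<leftarrow>ys. c * R y w)" for w
    proof -
      have "(\<Sum>(c,y)\<leftarrow>ys. c * h (cjoin (z + y) w)) =
            (\<Sum>(c,y)\<leftarrow>ys. c * (R y w + h (cjoin z w) + Dh (cjoin z w) (cjoin y 0)))"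
        by (simp add: R_def)
      also have "\<dots> = (\<Sum>(c,y)\<leftarrow>ys. c * R y w) + (\<Sum>(c,y)\<leftarrow>ys. c) * h (cjoin z w)
          + Dh (cjoin z w) (cjoin (\<Sum>(c,y)\<leftarrow>ys. c *s y) 0)"
        by (rule sum_list_split) (simp_all add: Dadd Dhom)
      also have "\<dots> = (\<Sum>(c,y)\<leftarrow>ys. c * R y w)" using ys Dhom[of _ 0 0] by (simp add: cjoin_zero)
      finally show ?thesis .
    qed
    have "norm (v (\<lambda>x. \<Sum>(c,y)\<leftarrow>ys. c * h (cjoin (z + y) x)))
        \<le> Cv * (\<Sum>om\<in>F. K om * (\<Sum>(c,y)\<leftarrow>ys. norm c * norm y ^ 2))"
    proof (rule vb)
      show "(\<lambda>x. \<Sum>(c,y)\<leftarrow>ys. c * h (cjoin (z + y) x)) \<in> Hspace W N" using L e1 by simp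
      fix om w assume "om \<in> F" then have om: "om \<in> W" using F by auto
      show "N om w * norm (\<Sum>(c,y)\<leftarrow>ys. c * h (cjoin (z + y) w)) \<le> K om * (\<Sum>(c,y)\<leftarrow>ys. norm c * norm y ^ 2)"
        unfolding pw
        by (rule sum_list_bound[where P="\<lambda>y. R y w" and Q="\<lambda>y. norm y ^ 2"]) (use N0 om core ys(1) K0 in auto)
    qed
    then show ?thesis using L e1 e2 by (simp add: Kt_def sum_distrib_right mult.assoc)
  qed
  define \<tau> where "\<tau> n = (1 / of_nat (Suc n) :: complex)" for n
  define s where "s n u = of_nat (Suc n) * (\<Phi> (z + \<tau> n *s u) - \<Phi> z)" for n u
  have \<tau>n: "norm (\<tau> n *s u) = norm u / real (Suc n)" for n u
    unfolding \<tau>_def by (rule norm_inv_nat_c)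
  have \<tau>inv: "of_nat (Suc n) *s (\<tau> n *s u) = u" for n u
    unfolding \<tau>_def by (rule smult_inv_nat_c)
  have small: "norm (\<tau> n *s u) \<le> r" if "norm u \<le> r * real (Suc n)" for n u
    using that r by (simp add: \<tau>n pos_divide_le_eq del: of_nat_Suc)
  have Kt0: "0 \<le> Kt" unfolding Kt_def using F K0 by (auto intro!: mult_nonneg_nonneg sum_nonneg)
  have negs: "(- c) *s x = - (c *s x)" for c and x :: "complex^'a" by (simp add: vec_eq_iff)
  have cauchy: "norm (s m u - s n u) \<le> Kt * norm u^2 / real (Suc m) + Kt * norm u^2 / real (Suc n)"
    if mn: "norm u \<le> r * real (Suc m)" "norm u \<le> r * real (Suc n)" for m n u
  proof -
    define ys where "ys = [(of_nat (Suc m) :: complex, \<tau> m *s u), (- of_nat (Suc n), \<tau> n *s u), (of_nat n - of_nat m, 0)]"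
    have b1: "norm (\<Sum>(c,y)\<leftarrow>ys. c * \<Phi> (z + y)) \<le> Kt * (\<Sum>(c,y)\<leftarrow>ys. norm c * norm y ^ 2)"
    proof (rule comb)
      show "\<forall>(c,y)\<in>set ys. norm y \<le> r" using small[OF mn(1)] small[OF mn(2)] r by (auto simp: ys_def)
      show "(\<Sum>(c,y)\<leftarrow>ys. c) = 0" by (simp add: ys_def)
      show "(\<Sum>(c,y)\<leftarrow>ys. c *s y) = 0" unfolding ys_def
        by (simp only: list.map sum_list.Cons sum_list.Nil prod.case \<tau>inv negs vector_smult_rzero add_0_right) simp
    qed
    have e1: "(\<Sum>(c,y)\<leftarrow>ys. c * \<Phi> (z + y)) = s m u - s n u"
      by (simp add: ys_def s_def algebra_simps)
    have e2: "(\<Sum>(c,y)\<leftarrow>ys. norm c * norm y ^ 2) = norm u^2 / real (Suc m) + norm u^2 / real (Suc n)"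
      by (simp add: ys_def \<tau>n power2_eq_square del: of_nat_Suc)
    show ?thesis using b1[unfolded e1 e2] by (simp add: distrib_left)
  qed
  have arch: "\<exists>N0. \<forall>n\<ge>N0. norm u \<le> r * real (Suc n)" for u
  proof -
    obtain N0 where "norm u / r < real N0" using reals_Archimedean2 by blast
    then have a: "norm u < real N0 * r" using r by (simp add: divide_less_eq)
    have "norm u \<le> r * real (Suc n)" if "n \<ge> N0" for n
    proof -
      have "real N0 * r \<le> real (Suc n) * r" using that r by (intro mult_right_mono) auto
      then show ?thesis using a by (simp add: mult.commute)
    qed
    then show ?thesis by blast
  qed
  define L where "L u = lim (\<lambda>n. s n u)" for u
  have Ls: "(\<lambda>n. s n u) \<longlonglongrightarrow> L u" for u
  proof -
    obtain N0 where N0: "\<forall>n\<ge>N0. norm u \<le> r * real (Suc n)" using arch by blast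
    have "convergent (\<lambda>n. s n u)"
      by (rule convergent_by_bound[where N=N0 and B="Kt * norm u^2"]) (use N0 cauchy in auto)
    then show ?thesis unfolding L_def by (simp add: convergent_LIMSEQ_iff)
  qed
  have est: "norm (s n u - L u) \<le> Kt * norm u^2 / real (Suc n)" if nu: "norm u \<le> r * real (Suc n)" for n u
  proof (rule limit_bound[OF Ls, where N=n and B'="Kt * norm u^2"])
    fix m assume "n \<le> m"
    then have "r * real (Suc n) \<le> r * real (Suc m)" using r by (intro mult_left_mono) auto
    then have "norm u \<le> r * real (Suc m)" using nu by linarith
    then show "norm (s n u - s m u) \<le> Kt * norm u^2 / real (Suc n) + Kt * norm u^2 / real (Suc m)"
      using cauchy[OF nu] by simp
  qed
  have lin: "L (a *s u1 + b *s u2) = a * L u1 + b * L u2" for a b u1 u2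
  proof -
    define x where "x = a *s u1 + b *s u2"
    obtain N1 where N1: "\<forall>n\<ge>N1. norm x \<le> r * real (Suc n)" using arch by blast
    obtain N2 where N2: "\<forall>n\<ge>N2. norm u1 \<le> r * real (Suc n)" using arch by blast
    obtain N3 where N3: "\<forall>n\<ge>N3. norm u2 \<le> r * real (Suc n)" using arch by blast
    define Q where "Q = norm x ^ 2 + norm a * norm u1 ^ 2 + norm b * norm u2 ^ 2"
    have "L x - a * L u1 - b * L u2 = 0"
    proof (rule zero_by_bound[where N="max N1 (max N2 N3)" and B="Kt * Q + Kt * Q"])
      fix n assume "max N1 (max N2 N3) \<le> n"
      then have nx: "norm x \<le> r * real (Suc n)" and n1: "norm u1 \<le> r * real (Suc n)"
        and n2: "norm u2 \<le> r * real (Suc n)" using N1 N2 N3 by auto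
      define ys where "ys = [(1::complex, \<tau> n *s x), (- a, \<tau> n *s u1), (- b, \<tau> n *s u2), (a + b - 1, 0)]"
      have b1: "norm (\<Sum>(c,y)\<leftarrow>ys. c * \<Phi> (z + y)) \<le> Kt * (\<Sum>(c,y)\<leftarrow>ys. norm c * norm y ^ 2)"
      proof (rule comb)
        show "\<forall>(c,y)\<in>set ys. norm y \<le> r" using small[OF nx] small[OF n1] small[OF n2] r by (auto simp: ys_def)
        show "(\<Sum>(c,y)\<leftarrow>ys. c) = 0" by (simp add: ys_def)
        show "(\<Sum>(c,y)\<leftarrow>ys. c *s y) = 0" by (simp add: ys_def x_def vec_eq_iff algebra_simps)
      qed
      have e2: "(\<Sum>(c,y)\<leftarrow>ys. norm c * norm y ^ 2) = Q / (real (Suc n))^2"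
        by (simp add: ys_def \<tau>n Q_def power_divide add_divide_distrib del: of_nat_Suc)
      have e3: "s n x - a * s n u1 - b * s n u2 = of_nat (Suc n) * (\<Sum>(c,y)\<leftarrow>ys. c * \<Phi> (z + y))"
        by (simp add: ys_def s_def algebra_simps del: of_nat_Suc)
      have "norm (s n x - a * s n u1 - b * s n u2) = real (Suc n) * norm (\<Sum>(c,y)\<leftarrow>ys. c * \<Phi> (z + y))"
        unfolding e3 norm_mult by (simp only: norm_of_nat)
      also have "\<dots> \<le> real (Suc n) * (Kt * (Q / (real (Suc n))^2))"
        using b1[unfolded e2] by (intro mult_left_mono) auto
      finally have D0: "norm (s n x - a * s n u1 - b * s n u2) \<le> real (Suc n) * (Kt * (Q / (real (Suc n))^2))" .
      have D0': "norm (s n x - a * s n u1 - b * s n u2) \<le> Kt * Q / real (Suc n)"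
        using D0 by (simp add: power2_eq_square del: of_nat_Suc)
      have E0: "norm (s n x - L x) \<le> Kt * norm x^2 / real (Suc n)" by (rule est[OF nx])
      have E1: "norm a * norm (s n u1 - L u1) \<le> norm a * (Kt * norm u1^2 / real (Suc n))"
        by (intro mult_left_mono est[OF n1]) auto
      have E2: "norm b * norm (s n u2 - L u2) \<le> norm b * (Kt * norm u2^2 / real (Suc n))"
        by (intro mult_left_mono est[OF n2]) auto
      have eq: "L x - a * L u1 - b * L u2 =
          (s n x - a * s n u1 - b * s n u2) - (s n x - L x) + a * (s n u1 - L u1) + b * (s n u2 - L u2)"
        by (simp add: algebra_simps)
      have tri: "norm (L x - a * L u1 - b * L u2) \<le> norm (s n x - a * s n u1 - b * s n u2) + norm (s n x - L x)
           + norm a * norm (s n u1 - L u1) + norm b * norm (s n u2 - L u2)"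
        unfolding eq by (rule tri4)
      have "Kt * Q / real (Suc n) + Kt * norm x^2 / real (Suc n) + norm a * (Kt * norm u1^2 / real (Suc n))
           + norm b * (Kt * norm u2^2 / real (Suc n)) = (Kt * Q + Kt * Q) / real (Suc n)"
        by (simp add: Q_def field_simps del: of_nat_Suc)
      then show "norm (L x - a * L u1 - b * L u2) \<le> (Kt * Q + Kt * Q) / real (Suc n)"
        using tri D0' E0 E1 E2 by linarith
    qed
    then show ?thesis by (simp add: x_def algebra_simps)
  qed
  have hom: "L (c *s x) = c * L x" for c x
    using lin[of c x 0 0] by simp
  have "linear L"
  proof (rule linearI)
    fix x y show "L (x + y) = L x + L y" using lin[of 1 x 1 y] by simp
  next
    fix c :: real and x :: "complex^'a"
    have "of_real c *s x = c *\<^sub>R x"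
    proof -
      have "complex_of_real c * d = c *\<^sub>R d" for d :: complex by (simp add: scaleR_conv_of_real)
      then show ?thesis by (simp add: vec_eq_iff)
    qed
    then show "L (c *\<^sub>R x) = c *\<^sub>R L x" using hom[of "of_real c" x] by (simp add: scaleR_conv_of_real)
  qed
  then have bl: "bounded_linear L" by (simp add: linear_conv_bounded_linear)
  have "(\<Phi> has_derivative L) (at z)"
  proof (rule has_derivative_quad[OF bl r])
    fix u :: "complex^'a" assume "norm u \<le> r"
    then have "norm (s 0 u - L u) \<le> Kt * norm u^2 / real (Suc 0)" by (intro est) simp
    then show "norm (\<Phi> (z + u) - \<Phi> z - L u) \<le> Kt * norm u ^ 2" by (simp add: s_def \<tau>_def)
  qed
  then show "\<exists>D. ((\<lambda>z. v (\<lambda>w. h (cjoin z w))) has_derivative D) (at z) \<and> (\<forall>c x. D (c *s x) = c * D x)"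
    using hom unfolding \<Phi>_def by blast
qed

theorem lemma3p9:
  fixes G :: "'g set" and M :: "'g \<Rightarrow> complex ^ 'a \<Rightarrow> real"
    and W :: "'o set" and N :: "'o \<Rightarrow> complex ^ 'b \<Rightarrow> real"
    and h :: "complex ^ ('a + 'b) \<Rightarrow> complex"
  assumes M: "defining_family G M"
    and N: "defining_family W N"
    and h: "h \<in> Hspace (G \<times> W) (tensor_family M N)"
    and I: "\<forall>\<omega>\<in>W. \<exists>\<omega>'\<in>W. \<exists>L :: complex ^ 'b \<Rightarrow> real.
              bounded (range L) \<and> integrable lborel L \<and> (\<forall>w. 0 \<le> L w) \<and>
              (\<forall>w. N \<omega> w \<le> L w * N \<omega>' w) \<and> (L \<longlongrightarrow> 0) at_infinity"
    and II: "\<forall>\<omega>\<in>W. \<exists>\<omega>'\<in>W. \<exists>B :: (complex ^ 'b) set. \<exists>C>0. open B \<and> 0 \<in> B \<and>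
              (\<forall>w w'. w' \<in> B \<longrightarrow> N \<omega> w \<le> C * N \<omega>' (w + w'))"
  shows "(\<forall>z. (\<lambda>w. h (cjoin z w)) \<in> Hspace W N) \<and>
         (\<forall>v\<in>Hdual W N. (\<lambda>z. v (\<lambda>w. h (cjoin z w))) \<in> Hspace G M)"
proof -
  have N0: "\<forall>om\<in>W. \<forall>w. 0 \<le> N om w" using N unfolding defining_family_def by blast
  have M0: "\<forall>g\<in>G. \<forall>z. 0 \<le> M g z" using M unfolding defining_family_def by blast
  have hent: "entire_cn h" using h by (simp add: Hspace_def)
  have hbdd: "bdd_above (range (\<lambda>x. tensor_family M N (g, om) x * norm (h x)))"
    if "g \<in> G" "om \<in> W" for g om
    using h that by (auto simp: Hspace_def)
  define A where "A g om = (SUP x. tensor_family M N (g, om) x * norm (h x))" for g om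
  have Abnd: "M g z * N om w * norm (h (cjoin z w)) \<le> A g om"
    if "g \<in> G" "om \<in> W" for g om z w
  proof -
    have "tensor_family M N (g, om) (cjoin z w) * norm (h (cjoin z w)) \<le> A g om"
      unfolding A_def by (rule cSUP_upper[OF UNIV_I hbdd[OF that]])
    then show ?thesis by (simp add: tensor_cjoin)
  qed
  have A0: "0 \<le> A g om" if "g \<in> G" "om \<in> W" for g om
    using Abnd[OF that, of 0 0] M0 N0 that
    by (meson mult_nonneg_nonneg norm_ge_zero order_trans)
  have Mloc: "\<exists>g\<in>G. \<exists>U. open U \<and> z \<in> U \<and> (\<exists>C>0. \<forall>x\<in>U. C \<le> M g x)" for z
    using M unfolding defining_family_def by blast
  have part1: "(\<lambda>w. h (cjoin z w)) \<in> Hspace W N" for z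
  proof -
    have ent: "entire_cn (\<lambda>w. h (cjoin z w))"
      unfolding entire_cn_def
    proof
      fix w
      obtain D where D: "(h has_derivative D) (at (cjoin z w))" "\<forall>c x. D (c *s x) = c * D x"
        using hent unfolding entire_cn_def by blast
      have eqf: "(\<lambda>w. cjoin 0 w + cjoin z 0) = cjoin z"
        by (rule ext) (metis add.commute cjoin_split)
      have "((\<lambda>w. cjoin 0 w + cjoin z 0) has_derivative (\<lambda>w. cjoin 0 w)) (at w)"
        by (intro has_derivative_add_const bounded_linear_imp_has_derivative bl_cjoin_right)
      then have i: "((\<lambda>w. cjoin z w) has_derivative (\<lambda>w. cjoin 0 w)) (at w)"
        by (simp only: eqf)
      have "((\<lambda>w. h (cjoin z w)) has_derivative (\<lambda>x. D (cjoin 0 x))) (at w)"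
        using has_derivative_compose[OF i D(1)] by simp
      moreover have "\<forall>c x. D (cjoin 0 (c *s x)) = c * D (cjoin 0 x)"
        using D(2) cjoin_smult[of _ 0] by (metis vector_smult_rzero)
      ultimately show "\<exists>D. ((\<lambda>w. h (cjoin z w)) has_derivative D) (at w) \<and> (\<forall>c x. D (c *s x) = c * D x)"
        by blast
    qed
    have "bdd_above (range (\<lambda>w. N om w * norm (h (cjoin z w))))" if om: "om \<in> W" for om
    proof -
      obtain g U C where g: "g \<in> G" "open U" "z \<in> U" "C > 0" "\<forall>x\<in>U. C \<le> M g x"
        using Mloc[of z] by blast
      have "N om w * norm (h (cjoin z w)) \<le> A g om / C" for w
      proof -
        have "C * (N om w * norm (h (cjoin z w))) \<le> M g z * (N om w * norm (h (cjoin z w)))"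
          using g N0 om by (intro mult_right_mono) auto
        also have "\<dots> \<le> A g om" using Abnd[OF g(1) om, of z w] by (simp add: mult.assoc)
        finally show ?thesis using g(4) by (simp add: field_simps)
      qed
      then show ?thesis by (auto simp: bdd_above_def)
    qed
    then show ?thesis using ent by (simp add: Hspace_def)
  qed
  have part2: "(\<lambda>z. v (\<lambda>w. h (cjoin z w))) \<in> Hspace G M" if v: "v \<in> Hdual W N" for v
  proof -
    define \<Phi> where "\<Phi> z = v (\<lambda>w. h (cjoin z w))" for z
    obtain F Cv where F: "finite F" "F \<subseteq> W" "0 \<le> Cv"
      and vb: "\<And>f B. f \<in> Hspace W N \<Longrightarrow> (\<And>om w. om \<in> F \<Longrightarrow> N om w * norm (f w) \<le> B om) \<Longrightarrow>
         norm (v f) \<le> Cv * (\<Sum>om\<in>F. B om)"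
      using Hdual_bound[OF v part1[of 0]] by blast
    have bnd: "bdd_above (range (\<lambda>z. M g z * norm (\<Phi> z)))" if g: "g \<in> G" for g
    proof -
      have "M g z * norm (\<Phi> z) \<le> Cv * (\<Sum>om\<in>F. A g om)" for z
      proof (cases "M g z = 0")
        case True
        then show ?thesis using F A0 g by (auto intro!: mult_nonneg_nonneg sum_nonneg)
      next
        case False
        have "0 \<le> M g z" using M0 g by blast
        with False have Mp: "M g z > 0" by simp
        have "norm (\<Phi> z) \<le> Cv * (\<Sum>om\<in>F. A g om / M g z)"
          unfolding \<Phi>_def
        proof (rule vb[OF part1])
          fix om w assume "om \<in> F"
          then have om: "om \<in> W" using F by auto
          have "M g z * (N om w * norm (h (cjoin z w))) \<le> A g om"
            using Abnd[OF g om, of z w] by (simp add: mult.assoc)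
          then show "N om w * norm (h (cjoin z w)) \<le> A g om / M g z"
            using Mp by (simp add: field_simps)
        qed
        also have "\<dots> = Cv * (\<Sum>om\<in>F. A g om) / M g z"
          by (simp add: sum_divide_distrib[symmetric])
        finally show ?thesis using Mp by (simp add: field_simps)
      qed
      then show ?thesis by (auto simp: bdd_above_def)
    qed
    have ent: "entire_cn (\<lambda>z. v (\<lambda>w. h (cjoin z w)))"
      by (rule Phi_entire[OF hent N0 Abnd A0 Mloc part1 v])
    show ?thesis using ent bnd unfolding Hspace_def \<Phi>_def by auto
  qed
  show ?thesis using part1 part2 by blast
qed

end
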